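(* Let $H$ be a Hilbert space and $U_{ik}\in B(H)$, $i,k=1,\dots,n$, operators satisfying relations (R1)–(R5). Let $P_{ik}=U_{ik}^*U_{ik}$ and, for $\sigma\in S_n$, $P_\sigma=P_{1,\sigma^{-1}(1)}P_{2,\sigma^{-1}(2)}\cdots P_{n,\sigma^{-1}(n)}$. Then the projections $P_\sigma$, $\sigma\in S_n$, are central in the C*-algebra generated by $\{U_{ik}\}$ and form a resolution of the identity: $\sum_{\sigma\in S_n}P_\sigma=1$.
   Context: $n\ge2$, $\theta\in M_n(\mathbb R)$ skew-symmetric, $\omega_{ij}=e^{2\pi i\theta_{ij}}$. Relations, for all $i,j,k,l\in\{1,\dots,n\}$: (R1) $U_{ik}U_{jl}+\omega_{ji}U_{jk}U_{il}=\omega_{kl}U_{il}U_{jk}+\omega_{ji}\omega_{kl}U_{jl}U_{ik}$; (R2) $\sum_iU_{ik}U_{il}^*=\delta_{kl}1$; (R3) $\sum_iU_{il}^*U_{ik}=\delta_{kl}1$; (R4) $U_{jk}U_{ik}^*=0$ for $i\neq j$; (R5) $U_{ik}^*U_{jk}=0$ for $i\neq j$. *)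

theory Defs
  imports "HOL-Analysis.Analysis" "HOL-Combinatorics.Permutations"
begin

text \<open>Abstract unital C*-algebra: a real Banach algebra 'a with a central element iu
  (the imaginary unit, iu*iu = -1) giving the complex scalar action, and an involution st.\<close>

definition scC :: "'a::real_normed_algebra_1 \<Rightarrow> complex \<Rightarrow> 'a \<Rightarrow> 'a" where
  "scC iu c x = Re c *\<^sub>R x + Im c *\<^sub>R (iu * x)"

definition unital_cstar_algebra :: "('a::{real_normed_algebra_1,banach} \<Rightarrow> 'a) \<Rightarrow> 'a \<Rightarrow> bool" where
  "unital_cstar_algebra st iu \<longleftrightarrow>
     iu * iu = -1 \<and> (\<forall>x. iu * x = x * iu) \<and>
     (\<forall>c x. norm (scC iu c x) = cmod c * norm x) \<and>
     (\<forall>x. st (st x) = x) \<and> (\<forall>x y. st (x + y) = st x + st y) \<and>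
     (\<forall>x y. st (x * y) = st y * st x) \<and>
     (\<forall>c x. st (scC iu c x) = scC iu (cnj c) (st x)) \<and>
     (\<forall>x. norm (st x * x) = (norm x)^2)"

definition cstar_subalgebra :: "('a::{real_normed_algebra_1,banach} \<Rightarrow> 'a) \<Rightarrow> 'a \<Rightarrow> 'a set \<Rightarrow> bool" where
  "cstar_subalgebra st iu A \<longleftrightarrow> closed A \<and> 0 \<in> A \<and>
     (\<forall>x\<in>A. \<forall>y\<in>A. x + y \<in> A \<and> x * y \<in> A) \<and>
     (\<forall>x\<in>A. st x \<in> A \<and> (\<forall>c. scC iu c x \<in> A))"

definition cstar_generated :: "('a::{real_normed_algebra_1,banach} \<Rightarrow> 'a) \<Rightarrow> 'a \<Rightarrow> 'a set \<Rightarrow> 'a set" where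
  "cstar_generated st iu S = \<Inter>{A. cstar_subalgebra st iu A \<and> S \<subseteq> A}"

definition is_projection :: "('a::ring_1 \<Rightarrow> 'a) \<Rightarrow> 'a \<Rightarrow> bool" where
  "is_projection st p \<longleftrightarrow> st p = p \<and> p * p = p"

definition central_in :: "'a::ring_1 \<Rightarrow> 'a set \<Rightarrow> bool" where
  "central_in p A \<longleftrightarrow> p \<in> A \<and> (\<forall>a\<in>A. p * a = a * p)"

definition omega :: "(nat \<Rightarrow> nat \<Rightarrow> real) \<Rightarrow> nat \<Rightarrow> nat \<Rightarrow> complex" where
  "omega \<theta> i j = exp (2 * complex_of_real pi * \<i> * complex_of_real (\<theta> i j))"

definition Pop :: "('a::ring_1 \<Rightarrow> 'a) \<Rightarrow> (nat \<Rightarrow> nat \<Rightarrow> 'a) \<Rightarrow> nat \<Rightarrow> nat \<Rightarrow> 'a" where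
  "Pop st U i k = st (U i k) * U i k"

definition Psigma :: "('a::ring_1 \<Rightarrow> 'a) \<Rightarrow> (nat \<Rightarrow> nat \<Rightarrow> 'a) \<Rightarrow> nat \<Rightarrow> (nat \<Rightarrow> nat) \<Rightarrow> 'a" where
  "Psigma st U n \<sigma> = prod_list (map (\<lambda>i. Pop st U i (inv \<sigma> i)) [1..<n+1])"

end

theory Submission
  imports Defs
begin

declare upt_Suc[simp del]

definition proj :: "('a::ring_1 \<Rightarrow> 'a) \<Rightarrow> 'a \<Rightarrow> bool" where
  "proj st p \<longleftrightarrow> st p = p \<and> p * p = p"

locale cst =
  fixes st :: "'a::{real_normed_algebra_1,banach} \<Rightarrow> 'a" and iu :: 'a
  assumes cstar: "unital_cstar_algebra st iu"
begin

lemma st_st[simp]: "st (st x) = x" using cstar unfolding unital_cstar_algebra_def by blast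
lemma st_add[simp]: "st (x + y) = st x + st y" using cstar unfolding unital_cstar_algebra_def by blast
lemma st_mult[simp]: "st (x * y) = st y * st x" using cstar unfolding unital_cstar_algebra_def by blast
lemma iu_comm: "iu * x = x * iu" using cstar unfolding unital_cstar_algebra_def by blast
lemma cnorm: "norm (st x * x) = (norm x)^2" using cstar unfolding unital_cstar_algebra_def by blast

lemma st_zero[simp]: "st 0 = 0"
proof -
  have "st (0 + 0) = st 0 + st 0" by (rule st_add)
  then show ?thesis by simp
qed
lemma st_minus[simp]: "st (- x) = - st x"
proof -
  have "st (x + - x) = st x + st (- x)" by (rule st_add)
  then have "st x + st (- x) = 0" by simp
  from minus_unique[OF this] show ?thesis by simp
qed
lemma st_diff[simp]: "st (x - y) = st x - st y"
  using st_add[of x "-y"] by simp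
lemma st_one[simp]: "st 1 = 1"
proof -
  have "st 1 = st 1 * st (st 1)" by simp
  also have "\<dots> = st (st 1 * 1)" by (rule st_mult[symmetric])
  also have "\<dots> = 1" by simp
  finally show ?thesis .
qed
lemma st_sum: "st (sum f A) = sum (\<lambda>x. st (f x)) A"
  by (induct A rule: infinite_finite_induct) auto

lemma scC_mult_left[simp]: "scC iu c x * y = scC iu c (x * y)"
  by (simp add: scC_def algebra_simps)
lemma scC_mult_right[simp]: "x * scC iu c y = scC iu c (x * y)"
proof -
  have "x * (iu * y) = iu * (x * y)" by (metis iu_comm mult.assoc)
  then show ?thesis by (simp add: scC_def distrib_left)
qed
lemma scC_zero[simp]: "scC iu c 0 = 0" by (simp add: scC_def)
lemma scC_one[simp]: "scC iu 1 x = x" by (simp add: scC_def)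

lemma proj_norm: "proj st p \<Longrightarrow> norm p \<le> 1"
proof -
  assume "proj st p"
  then have "st p = p" "p * p = p" by (auto simp: proj_def)
  with cnorm[of p] have "norm p = (norm p)^2" by simp
  then have "norm p * (norm p - 1) = 0" by (simp add: power2_eq_square algebra_simps)
  then have "norm p = 0 \<or> norm p = 1" by simp
  then show ?thesis by auto
qed

lemma proj_compl: "proj st p \<Longrightarrow> proj st (1 - p)"
  by (auto simp: proj_def algebra_simps)

lemma proj_sum_zero:
  assumes fin: "finite S" and pr: "\<forall>j\<in>S. proj st (q j)" and s0: "sum q S = 0" and j0: "j0 \<in> S"
  shows "q j0 = 0"
proof -
  define S' where "S' = S - {j0}"
  define m where "m = card S'"
  have finS': "finite S'" using fin by (simp add: S'_def)
  have h1: "sum q S' = - q j0"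
    using sum.remove[OF fin j0, of q] s0 by (simp add: S'_def eq_neg_iff_add_eq_0 add.commute)
  have h2: "(\<Sum>j\<in>S'. (1 - q j)) = of_nat m + q j0"
    by (simp add: sum_subtractf h1 m_def)
  have h3: "norm (\<Sum>j\<in>S'. (1 - q j)) \<le> real m"
  proof -
    have "norm (\<Sum>j\<in>S'. (1 - q j)) \<le> (\<Sum>j\<in>S'. norm (1 - q j))" by (rule norm_sum)
    also have "\<dots> \<le> (\<Sum>j\<in>S'. 1)"
      by (rule sum_mono) (use pr in \<open>auto simp: S'_def intro!: proj_norm proj_compl\<close>)
    finally show ?thesis by (simp add: m_def)
  qed
  have h4: "q j0 * (of_nat m + q j0) = real (m+1) *\<^sub>R q j0"
  proof -
    have "q j0 * q j0 = q j0" using pr j0 by (auto simp: proj_def)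
    then have "q j0 * (of_nat m + q j0) = of_nat m * q j0 + q j0"
      by (simp add: distrib_left mult_of_nat_commute)
    also have "\<dots> = real (m+1) *\<^sub>R q j0"
      by (simp add: scaleR_conv_of_real algebra_simps)
    finally show ?thesis .
  qed
  have "real (m+1) * norm (q j0) = norm (q j0 * (of_nat m + q j0))" by (simp add: h4)
  also have "\<dots> \<le> norm (q j0) * norm (of_nat m + q j0 :: 'a)" by (rule norm_mult_ineq)
  also have "\<dots> \<le> norm (q j0) * real m" using h2 h3 by (intro mult_left_mono) auto
  finally have "norm (q j0) \<le> 0" by (simp add: algebra_simps)
  then show ?thesis by simp
qed

lemma rowsum:
  fixes E :: "nat \<Rightarrow> nat \<Rightarrow> 'a"
  assumes fin: "finite I"
    and pr: "\<forall>i\<in>I. \<forall>k\<in>I. proj st (E i k)"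
    and orth: "\<forall>i\<in>I. \<forall>k\<in>I. \<forall>l\<in>I. k \<noteq> l \<longrightarrow> E i k * E i l = 0"
    and col: "\<forall>k\<in>I. (\<Sum>i\<in>I. E i k) = 1"
    and i: "i \<in> I"
  shows "(\<Sum>k\<in>I. E i k) = 1"
proof -
  have prR: "proj st (\<Sum>k\<in>I. E i k)" if i: "i \<in> I" for i
  proof -
    have "st (\<Sum>k\<in>I. E i k) = (\<Sum>k\<in>I. E i k)"
      using pr i by (simp add: st_sum proj_def)
    moreover have "(\<Sum>k\<in>I. E i k) * (\<Sum>k\<in>I. E i k) = (\<Sum>k\<in>I. E i k)"
    proof -
      have "(\<Sum>k\<in>I. E i k) * (\<Sum>l\<in>I. E i l) = (\<Sum>k\<in>I. E i k * (\<Sum>l\<in>I. E i l))"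
        by (simp add: sum_distrib_right)
      also have "\<dots> = (\<Sum>k\<in>I. E i k)"
      proof (rule sum.cong[OF refl])
        fix k assume k: "k \<in> I"
        have "E i k * (\<Sum>l\<in>I. E i l) = (\<Sum>l\<in>I. E i k * E i l)" by (simp add: sum_distrib_left)
        also have "\<dots> = E i k * E i k + (\<Sum>l\<in>I - {k}. E i k * E i l)"
          using sum.remove[OF fin k] by blast
        also have "(\<Sum>l\<in>I - {k}. E i k * E i l) = 0"
          using orth i k by (intro sum.neutral) auto
        finally show "E i k * (\<Sum>l\<in>I. E i l) = E i k" using pr i k by (simp add: proj_def)
      qed
      finally show ?thesis .
    qed
    ultimately show ?thesis by (simp add: proj_def)
  qed
  have "(\<Sum>i\<in>I. 1 - (\<Sum>k\<in>I. E i k)) = (\<Sum>i\<in>I. 1) - (\<Sum>i\<in>I. \<Sum>k\<in>I. E i k)"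
    by (simp only: sum_subtractf)
  also have "(\<Sum>i\<in>I. \<Sum>k\<in>I. E i k) = (\<Sum>k\<in>I. \<Sum>i\<in>I. E i k)" by (rule sum.swap)
  also have "\<dots> = (\<Sum>k\<in>I. 1)" using col by simp
  also have "(\<Sum>i\<in>I. (1::'a)) - (\<Sum>k\<in>I. 1) = 0" by simp
  finally have s0: "(\<Sum>i\<in>I. 1 - (\<Sum>k\<in>I. E i k)) = 0" .
  have "\<forall>j\<in>I. proj st (1 - (\<Sum>k\<in>I. E j k))" using prR proj_compl by blast
  from proj_sum_zero[OF fin this s0 i] have "1 - (\<Sum>k\<in>I. E i k) = 0" .
  then show ?thesis by simp
qed

end


lemma sum_single:
  assumes "finite A" "j \<in> A" "\<forall>i\<in>A. i \<noteq> j \<longrightarrow> f i = 0"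
  shows "sum f A = f j"
proof -
  have "sum f A = f j + sum f (A - {j})" using sum.remove[OF assms(1,2)] by blast
  also have "sum f (A - {j}) = 0" using assms(3) by (intro sum.neutral) auto
  finally show ?thesis by simp
qed


lemma pl_comm:
  fixes x :: "'b::monoid_mult"
  shows "(\<forall>y\<in>set xs. x * y = y * x) \<Longrightarrow> x * prod_list xs = prod_list xs * x"
proof (induction xs)
  case Nil then show ?case by simp
next
  case (Cons y ys)
  have 1: "x * y = y * x" using Cons.prems by simp
  have 2: "x * prod_list ys = prod_list ys * x" using Cons.prems Cons.IH by simp
  have "x * prod_list (y # ys) = (x * y) * prod_list ys" by (simp add: mult.assoc)
  also have "\<dots> = y * (x * prod_list ys)" by (simp add: 1 mult.assoc)
  also have "\<dots> = prod_list (y # ys) * x" by (simp add: 2 mult.assoc)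
  finally show ?case .
qed

lemma pl_absorb:
  fixes a :: "'b::monoid_mult"
  shows "(\<forall>x\<in>set xs. \<forall>y\<in>set xs. x * y = y * x) \<Longrightarrow> (\<forall>x\<in>set xs. x * x = x) \<Longrightarrow> a \<in> set xs
    \<Longrightarrow> a * prod_list xs = prod_list xs"
proof (induction xs)
  case Nil then show ?case by simp
next
  case (Cons y ys)
  show ?case
  proof (cases "a = y")
    case True
    then have "a * a = a" using Cons.prems(2) by (metis list.set_intros(1))
    then show ?thesis using True by (simp add: mult.assoc[symmetric])
  next
    case False
    then have a: "a \<in> set ys" using Cons.prems(3) by simp
    have c: "\<forall>x\<in>set ys. \<forall>z\<in>set ys. x * z = z * x" using Cons.prems(1) by (metis list.set_intros(2))
    have d: "\<forall>x\<in>set ys. x * x = x" using Cons.prems(2) by (metis list.set_intros(2))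
    have 1: "a * y = y * a" using Cons.prems(1) a by (metis list.set_intros)
    have 2: "a * prod_list ys = prod_list ys" using Cons.IH[OF c d a] .
    have "a * prod_list (y # ys) = (a * y) * prod_list ys" by (simp add: mult.assoc)
    also have "\<dots> = y * (a * prod_list ys)" by (simp add: 1 mult.assoc)
    also have "\<dots> = prod_list (y # ys)" by (simp add: 2)
    finally show ?thesis .
  qed
qed

lemma pl_zero:
  fixes a :: "'b::ring_1"
  assumes "\<forall>x\<in>set xs. \<forall>y\<in>set xs. x * y = y * x" "\<forall>x\<in>set xs. x * x = x"
    "a \<in> set xs" "b \<in> set xs" "a * b = 0"
  shows "prod_list xs = 0"
proof -
  have "prod_list xs = a * (b * prod_list xs)"
    using pl_absorb[OF assms(1,2,3)] pl_absorb[OF assms(1,2,4)] by simp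
  also have "\<dots> = 0" using assms(5) by (simp add: mult.assoc[symmetric])
  finally show ?thesis .
qed

lemma pl_idem:
  fixes xs :: "'b::monoid_mult list"
  shows "(\<forall>x\<in>set xs. \<forall>y\<in>set xs. x * y = y * x) \<Longrightarrow> (\<forall>x\<in>set xs. x * x = x)
    \<Longrightarrow> prod_list xs * prod_list xs = prod_list xs"
proof (induction xs)
  case Nil then show ?case by simp
next
  case (Cons y ys)
  have c0: "\<forall>x\<in>set ys. \<forall>z\<in>set ys. x * z = z * x" using Cons.prems(1) by (metis list.set_intros(2))
  have d0: "\<forall>x\<in>set ys. x * x = x" using Cons.prems(2) by (metis list.set_intros(2))
  have c: "y * prod_list ys = prod_list ys * y"
    using Cons.prems(1) by (intro pl_comm) (metis list.set_intros)
  have yy: "y * y = y" using Cons.prems(2) by (metis list.set_intros(1))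
  have pp: "prod_list ys * prod_list ys = prod_list ys" using Cons.IH[OF c0 d0] .
  have "prod_list (y # ys) * prod_list (y # ys) = y * (prod_list ys * y) * prod_list ys"
    by (simp add: mult.assoc)
  also have "\<dots> = (y * y) * (prod_list ys * prod_list ys)" by (simp add: c[symmetric] mult.assoc)
  also have "\<dots> = prod_list (y # ys)" by (simp add: yy pp)
  finally show ?case .
qed

lemma pl_mem:
  fixes xs :: "'b::monoid_mult list"
  shows "xs \<noteq> [] \<Longrightarrow> set xs \<subseteq> A \<Longrightarrow> (\<forall>x\<in>A. \<forall>y\<in>A. x * y \<in> A) \<Longrightarrow> prod_list xs \<in> A"
proof (induction xs)
  case Nil then show ?case by simp
next
  case (Cons y ys)
  show ?case
  proof (cases "ys = []")
    case True then show ?thesis using Cons by simp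
  next
    case False then show ?thesis using Cons by simp
  qed
qed

lemma (in cst) pl_st:
  shows "(\<forall>x\<in>set xs. \<forall>y\<in>set xs. x * y = y * x) \<Longrightarrow> (\<forall>x\<in>set xs. st x = x)
    \<Longrightarrow> st (prod_list xs) = prod_list xs"
proof (induction xs)
  case Nil then show ?case by simp
next
  case (Cons y ys)
  have c0: "\<forall>x\<in>set ys. \<forall>z\<in>set ys. x * z = z * x" using Cons.prems(1) by (metis list.set_intros(2))
  have d0: "\<forall>x\<in>set ys. st x = x" using Cons.prems(2) by (metis list.set_intros(2))
  have c: "y * prod_list ys = prod_list ys * y"
    using Cons.prems(1) by (intro pl_comm) (metis list.set_intros)
  have "st (prod_list ys) = prod_list ys" using Cons.IH[OF c0 d0] .
  moreover have "st y = y" using Cons.prems(2) by (metis list.set_intros(1))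
  ultimately show ?case using c by simp
qed

locale qrel = cst st iu for st :: "'a::{real_normed_algebra_1,banach} \<Rightarrow> 'a" and iu :: 'a +
  fixes n :: nat and \<theta> :: "nat \<Rightarrow> nat \<Rightarrow> real" and U :: "nat \<Rightarrow> nat \<Rightarrow> 'a"
  assumes skew: "\<forall>i\<in>{1..n}. \<forall>j\<in>{1..n}. \<theta> j i = - \<theta> i j"
    and R1: "\<forall>i\<in>{1..n}. \<forall>j\<in>{1..n}. \<forall>k\<in>{1..n}. \<forall>l\<in>{1..n}.
       U i k * U j l + scC iu (omega \<theta> j i) (U j k * U i l)
       = scC iu (omega \<theta> k l) (U i l * U j k) + scC iu (omega \<theta> j i * omega \<theta> k l) (U j l * U i k)"
    and R2: "\<forall>k\<in>{1..n}. \<forall>l\<in>{1..n}. (\<Sum>i=1..n. U i k * st (U i l)) = (if k = l then 1 else 0)"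
    and R3: "\<forall>k\<in>{1..n}. \<forall>l\<in>{1..n}. (\<Sum>i=1..n. st (U i l) * U i k) = (if k = l then 1 else 0)"
    and R4: "\<forall>i\<in>{1..n}. \<forall>j\<in>{1..n}. \<forall>k\<in>{1..n}. i \<noteq> j \<longrightarrow> U j k * st (U i k) = 0"
    and R5: "\<forall>i\<in>{1..n}. \<forall>j\<in>{1..n}. \<forall>k\<in>{1..n}. i \<noteq> j \<longrightarrow> st (U i k) * U j k = 0"
begin

abbreviation "I \<equiv> {1..n}"
abbreviation P where "P i k \<equiv> st (U i k) * U i k"
abbreviation Q where "Q i k \<equiv> U i k * st (U i k)"

lemma R4': "i \<in> I \<Longrightarrow> j \<in> I \<Longrightarrow> k \<in> I \<Longrightarrow> i \<noteq> j \<Longrightarrow> U j k * st (U i k) = 0"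
  using R4 by blast
lemma R5': "i \<in> I \<Longrightarrow> j \<in> I \<Longrightarrow> k \<in> I \<Longrightarrow> i \<noteq> j \<Longrightarrow> st (U i k) * U j k = 0"
  using R5 by blast

lemma F3: assumes "j \<in> I" "k \<in> I" shows "U j k * st (U j k) * U j k = U j k"
proof -
  have "U j k * (\<Sum>i\<in>I. st (U i k) * U i k) = U j k" using R3 assms by simp
  also have "U j k * (\<Sum>i\<in>I. st (U i k) * U i k) = (\<Sum>i\<in>I. U j k * (st (U i k) * U i k))"
    by (simp add: sum_distrib_left)
  also have "\<dots> = U j k * (st (U j k) * U j k)"
    by (rule sum_single) (use assms R4' in \<open>auto simp: mult.assoc[symmetric]\<close>)
  finally show ?thesis by (simp add: mult.assoc)
qed

lemma F3': assumes "j \<in> I" "k \<in> I" shows "st (U j k) * U j k * st (U j k) = st (U j k)"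
proof -
  have "st (U j k * st (U j k) * U j k) = st (U j k)" using F3[OF assms] by simp
  then show ?thesis by (simp add: mult.assoc)
qed

lemma F4: assumes "j \<in> I" "k \<in> I" "l \<in> I" "k \<noteq> l" shows "st (U j k) * U j k * st (U j l) = 0"
proof -
  have "st (U j k) * (\<Sum>i\<in>I. U i k * st (U i l)) = 0" using R2 assms by simp
  also have "st (U j k) * (\<Sum>i\<in>I. U i k * st (U i l)) = (\<Sum>i\<in>I. st (U j k) * (U i k * st (U i l)))"
    by (simp add: sum_distrib_left)
  also have "\<dots> = st (U j k) * (U j k * st (U j l))"
    by (rule sum_single) (use assms R5' in \<open>auto simp: mult.assoc[symmetric]\<close>)
  finally show ?thesis by (simp add: mult.assoc)
qed

lemma F4': assumes "j \<in> I" "k \<in> I" "l \<in> I" "k \<noteq> l" shows "U j l * st (U j k) * U j k = 0"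
proof -
  have "st (st (U j k) * U j k * st (U j l)) = 0" using F4[OF assms] by simp
  then show ?thesis by (simp add: mult.assoc)
qed

lemma F5: assumes "j \<in> I" "k \<in> I" "l \<in> I" "k \<noteq> l" shows "U j l * st (U j l) * U j k = 0"
proof -
  have "U j l * (\<Sum>i\<in>I. st (U i l) * U i k) = 0" using R3 assms by simp
  also have "U j l * (\<Sum>i\<in>I. st (U i l) * U i k) = (\<Sum>i\<in>I. U j l * (st (U i l) * U i k))"
    by (simp add: sum_distrib_left)
  also have "\<dots> = U j l * (st (U j l) * U j k)"
    by (rule sum_single) (use assms R4' in \<open>auto simp: mult.assoc[symmetric]\<close>)
  finally show ?thesis by (simp add: mult.assoc)
qed

lemma F5': assumes "j \<in> I" "k \<in> I" "l \<in> I" "k \<noteq> l" shows "st (U j l) * U j k = 0"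
proof -
  have "st (U j l) * U j k = (st (U j l) * U j l * st (U j l)) * U j k" using F3'[OF assms(1,3)] by simp
  also have "\<dots> = st (U j l) * (U j l * st (U j l) * U j k)" by (simp add: mult.assoc)
  finally show ?thesis using F5[OF assms] by simp
qed

lemma projP: "i \<in> I \<Longrightarrow> k \<in> I \<Longrightarrow> proj st (P i k)"
  using F3[of i k] by (simp add: proj_def mult.assoc)
lemma projQ: "i \<in> I \<Longrightarrow> k \<in> I \<Longrightarrow> proj st (Q i k)"
  using F3'[of i k] by (simp add: proj_def mult.assoc)

lemma rowP: "i \<in> I \<Longrightarrow> (\<Sum>k\<in>I. P i k) = 1"
proof (rule rowsum[where E=P])
  show "\<forall>i\<in>I. \<forall>k\<in>I. \<forall>l\<in>I. k \<noteq> l \<longrightarrow> P i k * P i l = 0"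
  proof (intro ballI impI)
    fix i k l assume a: "i \<in> I" "k \<in> I" "l \<in> I" "k \<noteq> l"
    have "U i k * st (U i l) * U i l = 0" using F4'[of i l k] a by auto
    then show "P i k * P i l = 0" by (metis mult.assoc mult_zero_left mult_zero_right)
  qed
  show "\<forall>k\<in>I. (\<Sum>i\<in>I. P i k) = 1" using R3 by simp
qed (use projP in auto)

lemma rowQ: "i \<in> I \<Longrightarrow> (\<Sum>k\<in>I. Q i k) = 1"
proof (rule rowsum[where E=Q])
  show "\<forall>i\<in>I. \<forall>k\<in>I. \<forall>l\<in>I. k \<noteq> l \<longrightarrow> Q i k * Q i l = 0"
  proof (intro ballI impI)
    fix i k l assume a: "i \<in> I" "k \<in> I" "l \<in> I" "k \<noteq> l"
    have "st (U i k) * U i l = 0" using F5'[of i l k] a by auto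
    then show "Q i k * Q i l = 0" by (metis mult.assoc mult_zero_left mult_zero_right)
  qed
  show "\<forall>k\<in>I. (\<Sum>i\<in>I. Q i k) = 1" using R2 by simp
qed (use projQ in auto)


lemma omega_ii: "i \<in> I \<Longrightarrow> omega \<theta> i i = 1"
proof -
  assume "i \<in> I"
  then have "\<theta> i i = - \<theta> i i" using skew by blast
  then have "\<theta> i i = 0" by simp
  then show ?thesis by (simp add: omega_def)
qed

lemma F7: assumes a: "i \<in> I" "k \<in> I" "l \<in> I" "k \<noteq> l" shows "P i k * U i l = 0"
proof -
  define w where "w = omega \<theta> k l"
  have "U i k * U i l + scC iu (omega \<theta> i i) (U i k * U i l)
       = scC iu w (U i l * U i k) + scC iu (omega \<theta> i i * w) (U i l * U i k)"
    using R1 a unfolding w_def by blast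
  then have "U i k * U i l + U i k * U i l = scC iu w (U i l * U i k) + scC iu w (U i l * U i k)"
    using omega_ii[OF a(1)] by simp
  then have "(2::real) *\<^sub>R (U i k * U i l) = 2 *\<^sub>R scC iu w (U i l * U i k)" by (simp add: scaleR_2)
  then have X: "U i k * U i l = scC iu w (U i l * U i k)" by simp
  have "P i k * U i l = st (U i k) * (U i k * U i l)" by (simp add: mult.assoc)
  also have "\<dots> = scC iu w (st (U i k) * U i l * U i k)" by (simp add: X mult.assoc)
  also have "st (U i k) * U i l = 0" using F5'[of i l k] a by auto
  finally show ?thesis by simp
qed

lemma F8: assumes a: "i \<in> I" "k \<in> I" shows "P i k * U i k = U i k"
proof -
  have "(\<Sum>l\<in>I. P i l) * U i k = U i k" using rowP[OF a(1)] by simp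
  also have "(\<Sum>l\<in>I. P i l) * U i k = (\<Sum>l\<in>I. P i l * U i k)" by (simp add: sum_distrib_right)
  also have "\<dots> = P i k * U i k"
    by (rule sum_single) (use a F7 in auto)
  finally show ?thesis .
qed

lemma F15: "i \<in> I \<Longrightarrow> k \<in> I \<Longrightarrow> U i k * P i k = U i k"
  using F3 by (simp add: mult.assoc)

lemma F9: assumes a: "i \<in> I" "k \<in> I" "l \<in> I" "k \<noteq> l" shows "U i k * U i l = 0"
proof -
  have "U i k * U i l = U i k * (P i k * U i l)" using F15[OF a(1,2)] by (metis mult.assoc)
  then show ?thesis using F7[OF a] by simp
qed

lemma F10: assumes a: "i \<in> I" "k \<in> I" shows "U i k * Q i k = U i k"
proof -
  have "U i k * (\<Sum>l\<in>I. Q i l) = U i k" using rowQ[OF a(1)] by simp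
  also have "U i k * (\<Sum>l\<in>I. Q i l) = (\<Sum>l\<in>I. U i k * Q i l)" by (simp add: sum_distrib_left)
  also have "\<dots> = U i k * Q i k"
    by (rule sum_single) (use a F9 in \<open>auto simp: mult.assoc[symmetric]\<close>)
  finally show ?thesis .
qed

lemma F11: assumes a: "i \<in> I" "k \<in> I" shows "P i k = Q i k"
proof -
  have 1: "P i k = P i k * Q i k" using F10[OF a] by (metis mult.assoc)
  have 2: "Q i k = P i k * Q i k" using F8[OF a] by (metis mult.assoc)
  from 1 2 show ?thesis by simp
qed

lemma F12: assumes a: "i \<in> I" "j \<in> I" "k \<in> I" "i \<noteq> j" shows "P i k * U j k = 0"
proof -
  have "P i k * U j k = U i k * (st (U i k) * U j k)" using F11[OF a(1,3)] by (simp add: mult.assoc)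
  then show ?thesis using R5'[OF a(1,2,3,4)] by simp
qed

lemma F13: assumes a: "i \<in> I" "j \<in> I" "k \<in> I" "i \<noteq> j" shows "U j k * P i k = 0"
  using R4'[OF a] by (simp add: mult.assoc[symmetric])

lemma F14: assumes a: "i \<in> I" "k \<in> I" "l \<in> I" "k \<noteq> l" shows "U i l * P i k = 0"
  using F4'[OF a] by (simp add: mult.assoc)

lemma Pcol: assumes a: "i \<in> I" "j \<in> I" "k \<in> I" "i \<noteq> j" shows "P i k * P j k = 0"
proof -
  have "U i k * st (U j k) = 0" using R4'[of j i k] a by auto
  then show ?thesis by (metis mult.assoc mult_zero_left mult_zero_right)
qed

lemma F16: assumes a: "i \<in> I" "j \<in> I" "k \<in> I" "l \<in> I" "i \<noteq> j" "k \<noteq> l"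
  shows "P i k * U j l * P i k = P i k * U j l"
proof -
  define c where "c = omega \<theta> j i * omega \<theta> k l"
  define X where "X = U i k * U j l"
  have r: "X + scC iu (omega \<theta> j i) (U j k * U i l)
       = scC iu (omega \<theta> k l) (U i l * U j k) + scC iu c (U j l * U i k)"
    using R1 a unfolding X_def c_def by blast
  have f1: "st (U i k) * U i k * U j k = 0" using F12[OF a(1,2,3,5)] .
  have f2: "st (U i k) * U i k * U i l = 0" using F7[OF a(1,3,4,6)] .
  have f3: "st (U i k) * U i k * U i k = U i k" using F8[OF a(1,3)] .
  have "P i k * (X + scC iu (omega \<theta> j i) (U j k * U i l))
      = P i k * (scC iu (omega \<theta> k l) (U i l * U j k) + scC iu c (U j l * U i k))"
    using r by simp
  then have A: "X = scC iu c (st (U i k) * U i k * U j l * U i k)"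
    by (simp add: distrib_left X_def mult.assoc[symmetric] f1 f2 f3)
  have g1: "U i l * (st (U i k) * U i k) = 0" using F14[OF a(1,3,4,6)] .
  have g2: "U j k * (st (U i k) * U i k) = 0" using F13[OF a(1,2,3,5)] .
  have g3: "U i k * (st (U i k) * U i k) = U i k" using F15[OF a(1,3)] .
  have "(X + scC iu (omega \<theta> j i) (U j k * U i l)) * P i k
      = (scC iu (omega \<theta> k l) (U i l * U j k) + scC iu c (U j l * U i k)) * P i k"
    using r by simp
  then have B: "X * P i k = scC iu c (U j l * U i k)"
    by (simp add: distrib_right X_def mult.assoc g1 g2 g3)
  have pX: "P i k * X = X" using f3 by (simp add: X_def mult.assoc[symmetric])
  have "P i k * (X * P i k) = scC iu c (P i k * (U j l * U i k))" by (simp add: B)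
  also have "\<dots> = X" using A by (simp add: mult.assoc)
  finally have e: "P i k * (X * P i k) = X" .
  have pp: "P i k * P i k = P i k" using projP[OF a(1,3)] unfolding proj_def by simp
  have "X * P i k = (P i k * (X * P i k)) * P i k" by (simp only: e)
  also have "\<dots> = P i k * (X * (P i k * P i k))" by (simp only: mult.assoc)
  also have "\<dots> = X" by (simp only: pp e)
  finally have XP: "X * P i k = X" .
  have "P i k * U j l * P i k = st (U i k) * (X * P i k)" by (simp add: X_def mult.assoc)
  also have "\<dots> = st (U i k) * X" by (simp only: XP)
  also have "\<dots> = P i k * U j l" by (simp add: X_def mult.assoc)
  finally show ?thesis .
qed

lemma F17: assumes a: "i \<in> I" "j \<in> I" "k \<in> I" "l \<in> I" "i \<noteq> j" "k \<noteq> l"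
  shows "U j l * P i k = P i k * U j l"
proof -
  have "U j l * P i k = (\<Sum>i'\<in>I. P i' k) * (U j l * P i k)" using R3 a by simp
  also have "\<dots> = (\<Sum>i'\<in>I. P i' k * (U j l * P i k))" by (simp add: sum_distrib_right)
  also have "\<dots> = P i k * (U j l * P i k)"
  proof (rule sum_single)
    show "\<forall>i'\<in>I. i' \<noteq> i \<longrightarrow> P i' k * (U j l * P i k) = 0"
    proof (intro ballI impI)
      fix i' assume i': "i' \<in> I" "i' \<noteq> i"
      show "P i' k * (U j l * P i k) = 0"
      proof (cases "i' = j")
        case True
        then have "P i' k * U j l = 0" using F7[of j k l] a by auto
        then show ?thesis by (metis mult.assoc mult_zero_left)
      next
        case False
        have "P i' k * (U j l * P i k) = (P i' k * U j l * P i' k) * P i k"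
          using F16[of i' j k l] a i' False by (simp add: mult.assoc)
        also have "\<dots> = P i' k * U j l * (P i' k * P i k)" by (simp add: mult.assoc)
        also have "P i' k * P i k = 0" using Pcol[of i' i k] a i' by auto
        finally show ?thesis by simp
      qed
    qed
  qed (use a in auto)
  also have "\<dots> = P i k * U j l" using F16[OF a] by (simp add: mult.assoc)
  finally show ?thesis .
qed

lemma F18: assumes a: "i \<in> I" "j \<in> I" "k \<in> I" "l \<in> I"
  shows "P i k * U j l = U j l * P i k"
proof (cases "i = j")
  case True
  show ?thesis
  proof (cases "k = l")
    case True
    then show ?thesis using \<open>i = j\<close> F8 F15 a by simp
  next
    case False
    then show ?thesis using \<open>i = j\<close> F7[of i k l] F14[of i k l] a by simp
  qed
next
  case False
  show ?thesis
  proof (cases "k = l")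
    case True
    then show ?thesis using False F12[of i j k] F13[of i j k] a by simp
  next
    case kl: False
    then show ?thesis using False F17 a by simp
  qed
qed

lemma F19: assumes a: "i \<in> I" "j \<in> I" "k \<in> I" "l \<in> I"
  shows "P i k * st (U j l) = st (U j l) * P i k"
proof -
  have "st (P i k * U j l) = st (U j l * P i k)" using F18[OF a] by simp
  then show ?thesis by (simp add: mult.assoc)
qed

lemma F20: assumes a: "i \<in> I" "j \<in> I" "k \<in> I" "l \<in> I"
  shows "P i k * P j l = P j l * P i k"
proof -
  have "P i k * P j l = (P i k * st (U j l)) * U j l" by (metis mult.assoc)
  also have "\<dots> = st (U j l) * (P i k * U j l)" using F19[OF a] by (metis mult.assoc)
  also have "\<dots> = P j l * P i k" using F18[OF a] by (metis mult.assoc)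
  finally show ?thesis .
qed


lemma expand:
  "m \<le> n \<Longrightarrow> (\<Sum>g\<in>PiE {1..m} (\<lambda>_. I). prod_list (map (\<lambda>i. P i (g i)) [1..<m+1])) = 1"
proof (induction m)
  case 0 then show ?case by (simp add: PiE_empty_domain)
next
  case (Suc m)
  define B where "B = PiE {1..m} (\<lambda>_. I)"
  define T where "T g = prod_list (map (\<lambda>i. P i (g i)) [1..<m+1])" for g :: "nat \<Rightarrow> nat"
  have ins: "{1..Suc m} = insert (Suc m) {1..m}" by auto
  have nin: "Suc m \<notin> {1..m}" by simp
  have eq: "prod_list (map (\<lambda>i. P i ((g(Suc m := y)) i)) [1..<Suc m+1]) = T g * P (Suc m) y" for g y
  proof -
    have u: "[1..<Suc m+1] = [1..<m+1] @ [Suc m]" using upt_Suc_append[of 1 "Suc m"] by simp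
    have mm: "map (\<lambda>i. P i ((g(Suc m := y)) i)) [1..<m+1] = map (\<lambda>i. P i (g i)) [1..<m+1]"
      by (rule map_cong) auto
    show ?thesis unfolding u T_def by (simp only: map_append prod_list.append mm) simp
  qed
  have "(\<Sum>g\<in>PiE {1..Suc m} (\<lambda>_. I). prod_list (map (\<lambda>i. P i (g i)) [1..<Suc m+1]))
      = (\<Sum>p\<in>I \<times> B. prod_list (map (\<lambda>i. P i (((\<lambda>(y, g). g(Suc m := y)) p) i)) [1..<Suc m+1]))"
    unfolding ins PiE_insert_eq B_def
    by (subst sum.reindex[OF inj_combinator[OF nin]]) (simp add: o_def)
  also have "\<dots> = (\<Sum>p\<in>I \<times> B. T (snd p) * P (Suc m) (fst p))"
  proof (rule sum.cong[OF refl])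
    fix p assume "p \<in> I \<times> B"
    obtain y g where p: "p = (y, g)" by (cases p)
    show "prod_list (map (\<lambda>i. P i (((\<lambda>(y, g). g(Suc m := y)) p) i)) [1..<Suc m+1])
        = T (snd p) * P (Suc m) (fst p)" using eq[of g y] unfolding p by simp
  qed
  also have "\<dots> = (\<Sum>y\<in>I. \<Sum>g\<in>B. T g * P (Suc m) y)"
    by (subst sum.cartesian_product) (simp add: case_prod_beta)
  also have "\<dots> = (\<Sum>g\<in>B. \<Sum>y\<in>I. T g * P (Suc m) y)"
    by (rule sum.swap)
  also have "\<dots> = (\<Sum>g\<in>B. T g * (\<Sum>y\<in>I. P (Suc m) y))"
    by (simp add: sum_distrib_left)
  also have "\<dots> = (\<Sum>g\<in>B. T g)" using rowP[of "Suc m"] Suc.prems by simp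
  also have "\<dots> = 1" using Suc by (simp add: T_def B_def)
  finally show ?case .
qed

lemma comm_P_list:
  assumes "\<forall>x\<in>set xs. \<exists>i\<in>I. \<exists>k\<in>I. x = P i k"
  shows "\<forall>x\<in>set xs. \<forall>y\<in>set xs. x * y = y * x" "\<forall>x\<in>set xs. x * x = x" "\<forall>x\<in>set xs. st x = x"
proof -
  show "\<forall>x\<in>set xs. \<forall>y\<in>set xs. x * y = y * x"
  proof (intro ballI)
    fix x y assume "x \<in> set xs" "y \<in> set xs"
    then obtain i k j l where "i \<in> I" "k \<in> I" "x = P i k" "j \<in> I" "l \<in> I" "y = P j l"
      using assms by blast
    then show "x * y = y * x" using F20 by simp
  qed
  show "\<forall>x\<in>set xs. x * x = x"
  proof
    fix x assume "x \<in> set xs"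
    then obtain i k where "i \<in> I" "k \<in> I" "x = P i k" using assms by blast
    then show "x * x = x" using projP unfolding proj_def by simp
  qed
  show "\<forall>x\<in>set xs. st x = x"
  proof
    fix x assume "x \<in> set xs"
    then obtain i k where "i \<in> I" "k \<in> I" "x = P i k" using assms by blast
    then show "st x = x" by simp
  qed
qed

lemma nonin_zero:
  assumes g: "g \<in> PiE I (\<lambda>_. I)" and ni: "\<not> inj_on g I"
  shows "prod_list (map (\<lambda>i. P i (g i)) [1..<n+1]) = 0"
proof -
  obtain i j where ij: "i \<in> I" "j \<in> I" "i \<noteq> j" "g i = g j" using ni unfolding inj_on_def by blast
  let ?xs = "map (\<lambda>i. P i (g i)) [1..<n+1]"
  have gI: "\<And>x. x \<in> I \<Longrightarrow> g x \<in> I" using g by auto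
  have H: "\<forall>x\<in>set ?xs. \<exists>i\<in>I. \<exists>k\<in>I. x = P i k"
  proof
    fix x assume "x \<in> set ?xs"
    then obtain i where i: "i \<in> set [1..<n+1]" "x = P i (g i)" by auto
    then have "i \<in> I" by simp
    then show "\<exists>i\<in>I. \<exists>k\<in>I. x = P i k" using i gI by blast
  qed
  have ii: "i \<in> set [1..<n+1]" "j \<in> set [1..<n+1]" using ij by auto
  have sx: "set ?xs = (\<lambda>i. P i (g i)) ` set [1..<n+1]" by (rule set_map)
  have "P i (g i) \<in> set ?xs" unfolding sx using ii(1) by (rule imageI)
  moreover have "P j (g j) \<in> set ?xs" unfolding sx using ii(2) by (rule imageI)
  ultimately have a: "P i (g i) \<in> set ?xs" "P j (g j) \<in> set ?xs" by blast+
  then have a: "P i (g i) \<in> set ?xs" "P j (g i) \<in> set ?xs" using ij(4) by simp_all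
  have "P i (g i) * P j (g i) = 0" using Pcol[of i j "g i"] ij gI by auto
  then show ?thesis using pl_zero[OF comm_P_list(1,2)[OF H] a] by blast
qed

lemma sumperm: "(\<Sum>\<sigma> | \<sigma> permutes I. prod_list (map (\<lambda>i. P i (inv \<sigma> i)) [1..<n+1])) = 1"
proof -
  define T where "T g = prod_list (map (\<lambda>i. P i (g i)) [1..<n+1])" for g :: "nat \<Rightarrow> nat"
  let ?S = "{\<sigma>. \<sigma> permutes I}"
  let ?E = "PiE I (\<lambda>_. I)"
  let ?J = "{g \<in> ?E. inj_on g I}"
  have s1: "(\<Sum>\<sigma>\<in>?S. T (inv \<sigma>)) = (\<Sum>\<tau>\<in>?S. T \<tau>)"
    by (rule sum.reindex_bij_witness[where i=inv and j=inv]) (auto simp: permutes_inv permutes_inv_inv)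
  have s2: "(\<Sum>\<tau>\<in>?S. T \<tau>) = (\<Sum>g\<in>?J. T g)"
  proof (rule sum.reindex_bij_witness[where j="\<lambda>\<tau>. restrict \<tau> I" and i="\<lambda>g x. if x \<in> I then g x else x"])
    fix a assume a: "a \<in> ?S"
    then have ap: "a permutes I" by simp
    show "(\<lambda>x. if x \<in> I then restrict a I x else x) = a"
    proof
      fix x show "(if x \<in> I then restrict a I x else x) = a x"
      proof (cases "x \<in> I")
        case True then show ?thesis by simp
      next
        case False then show ?thesis using permutes_not_in[OF ap False] by simp
      qed
    qed
    have "inj_on a I" using permutes_inj_on[OF ap] .
    moreover have "inj_on (restrict a I) I \<longleftrightarrow> inj_on a I" by (rule inj_on_cong) simp
    ultimately have inj: "inj_on (restrict a I) I" by blast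
    have "\<forall>i\<in>I. a i \<in> I" using permutes_in_image[OF ap] by blast
    then have "restrict a I \<in> ?E" by (simp only: restrict_PiE_iff)
    then show "restrict a I \<in> ?J" using inj by blast
    have mm: "map (\<lambda>i. P i (restrict a I i)) [1..<n+1] = map (\<lambda>i. P i (a i)) [1..<n+1]"
      by (rule map_cong) auto
    show "T (restrict a I) = T a" unfolding T_def by (simp only: mm)
  next
    fix b assume b: "b \<in> ?J"
    then have bE: "b \<in> ?E" and binj: "inj_on b I" by blast+
    show "restrict (\<lambda>x. if x \<in> I then b x else x) I = b"
    proof
      fix x show "restrict (\<lambda>x. if x \<in> I then b x else x) I x = b x"
      proof (cases "x \<in> I")
        case True then show ?thesis by simp
      next
        case False then show ?thesis using PiE_arb[OF bE False] by simp
      qed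
    qed
    have bsub: "b ` I \<subseteq> I" using bE by (auto simp: PiE_iff)
    have bI: "b ` I = I" using endo_inj_surj[OF _ bsub binj] by simp
    let ?b = "\<lambda>x. if x \<in> I then b x else x"
    have "inj_on ?b I \<longleftrightarrow> inj_on b I" by (rule inj_on_cong) simp
    then have "inj_on ?b I" using binj by blast
    moreover have "?b ` I = I"
    proof -
      have "?b ` I = b ` I" by (rule image_cong) simp_all
      then show ?thesis using bI by simp
    qed
    ultimately have "bij_betw ?b I I" by (simp add: bij_betw_def)
    then have "?b permutes I"
    proof (rule bij_imp_permutes)
      fix x assume "x \<notin> I"
      then show "?b x = x" by (rule if_not_P)
    qed
    then show "?b \<in> ?S" by simp
  qed
  have s3: "(\<Sum>g\<in>?J. T g) = (\<Sum>g\<in>?E. T g)"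
  proof (rule sum.mono_neutral_left)
    show "finite ?E" by (rule finite_PiE) simp_all
    show "?J \<subseteq> ?E" by blast
    show "\<forall>g\<in>?E - ?J. T g = 0"
    proof
      fix g assume "g \<in> ?E - ?J"
      then have "g \<in> ?E" "\<not> inj_on g I" by blast+
      then show "T g = 0" unfolding T_def by (rule nonin_zero)
    qed
  qed
  have s4: "(\<Sum>g\<in>?E. T g) = 1" using expand[of n] by (simp add: T_def)
  have "(\<Sum>\<sigma>\<in>?S. T (inv \<sigma>)) = 1" using s1 s2 s3 s4 by simp
  then show ?thesis by (simp add: T_def)
qed

lemma central_prod:
  assumes H: "\<forall>x\<in>set xs. \<exists>i\<in>I. \<exists>k\<in>I. x = P i k" and ne: "xs \<noteq> []"
  shows "is_projection st (prod_list xs) \<and>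
     central_in (prod_list xs) (cstar_generated st iu {U i k | i k. i \<in> I \<and> k \<in> I})"
proof -
  note c = comm_P_list[OF H]
  define p where "p = prod_list xs"
  have proj: "is_projection st p"
    unfolding is_projection_def p_def using pl_st[OF c(1,3)] pl_idem[OF c(1,2)] by simp
  let ?G0 = "{U i k | i k. i \<in> I \<and> k \<in> I}"
  have mem: "p \<in> cstar_generated st iu ?G0"
    unfolding cstar_generated_def
  proof (rule InterI, clarify)
    fix A assume A: "cstar_subalgebra st iu A" "?G0 \<subseteq> A"
    have mulA: "\<forall>x\<in>A. \<forall>y\<in>A. x * y \<in> A" using A(1) unfolding cstar_subalgebra_def by blast
    have "set xs \<subseteq> A"
    proof
      fix x assume "x \<in> set xs"
      then obtain i k where ik: "i \<in> I" "k \<in> I" "x = P i k" using H by blast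
      have "U i k \<in> A" using A(2) ik by blast
      moreover then have "st (U i k) \<in> A" using A(1) unfolding cstar_subalgebra_def by blast
      ultimately show "x \<in> A" using mulA ik by blast
    qed
    then show "p \<in> A" unfolding p_def using pl_mem[OF ne _ mulA] by blast
  qed
  have commU: "p * U j l = U j l * p" if "j \<in> I" "l \<in> I" for j l
  proof -
    have "\<forall>y\<in>set xs. U j l * y = y * U j l"
    proof
      fix y assume "y \<in> set xs"
      then obtain i k where "i \<in> I" "k \<in> I" "y = P i k" using H by blast
      then show "U j l * y = y * U j l" using F18[of i j k l] that by simp
    qed
    from pl_comm[OF this] show ?thesis by (simp add: p_def)
  qed
  define C where "C = {x. p * x = x * p}"
  have stp: "st p = p" using proj unfolding is_projection_def by simp
  have subC: "cstar_subalgebra st iu C"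
    unfolding cstar_subalgebra_def
  proof (intro conjI ballI allI)
    show "closed C" unfolding C_def by (intro closed_Collect_eq continuous_intros)
    show "0 \<in> C" by (simp add: C_def)
    fix x assume x: "x \<in> C"
    then have px: "p * x = x * p" by (simp add: C_def)
    {
      fix y assume "y \<in> C"
      then have py: "p * y = y * p" by (simp add: C_def)
      show "x + y \<in> C" using px py by (simp add: C_def algebra_simps)
      have "p * (x * y) = x * y * p" by (simp add: mult.assoc[symmetric] px) (simp add: mult.assoc py)
      then show "x * y \<in> C" by (simp add: C_def)
    }
    have "st (x * p) = st (p * x)" using px by simp
    then show "st x \<in> C" by (simp add: C_def stp)
    fix c
    show "scC iu c x \<in> C" by (simp add: C_def px)
  qed
  have "?G0 \<subseteq> C" using commU by (auto simp: C_def)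
  then have "cstar_generated st iu ?G0 \<subseteq> C"
    unfolding cstar_generated_def using subC by (intro Inter_lower) simp
  then show ?thesis using proj mem unfolding central_in_def p_def[symmetric] C_def by blast
qed

lemma main:
  assumes n1: "n \<ge> 1"
  shows "(\<forall>\<sigma>. \<sigma> permutes {1..n} \<longrightarrow>
            is_projection st (Psigma st U n \<sigma>) \<and>
            central_in (Psigma st U n \<sigma>)
              (cstar_generated st iu {U i k | i k. i \<in> {1..n} \<and> k \<in> {1..n}}))
         \<and> (\<Sum>\<sigma> | \<sigma> permutes {1..n}. Psigma st U n \<sigma>) = 1"
proof
  have ps: "Psigma st U n \<sigma> = prod_list (map (\<lambda>i. P i (inv \<sigma> i)) [1..<n+1])" for \<sigma>
    by (simp add: Psigma_def Pop_def)
  show "(\<Sum>\<sigma> | \<sigma> permutes {1..n}. Psigma st U n \<sigma>) = 1" using sumperm by (simp add: ps)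
  show "\<forall>\<sigma>. \<sigma> permutes {1..n} \<longrightarrow>
            is_projection st (Psigma st U n \<sigma>) \<and>
            central_in (Psigma st U n \<sigma>)
              (cstar_generated st iu {U i k | i k. i \<in> {1..n} \<and> k \<in> {1..n}})"
  proof (intro allI impI)
    fix \<sigma> assume s: "\<sigma> permutes {1..n}"
    have H: "\<forall>x\<in>set (map (\<lambda>i. P i (inv \<sigma> i)) [1..<n+1]). \<exists>i\<in>I. \<exists>k\<in>I. x = P i k"
    proof
      fix x assume "x \<in> set (map (\<lambda>i. P i (inv \<sigma> i)) [1..<n+1])"
      then obtain i where i: "i \<in> set [1..<n+1]" "x = P i (inv \<sigma> i)" by auto
      then have "i \<in> I" by simp
      then show "\<exists>i\<in>I. \<exists>k\<in>I. x = P i k"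
        using i permutes_in_image[OF permutes_inv[OF s]] by blast
    qed
    have ne: "map (\<lambda>i. P i (inv \<sigma> i)) [1..<n+1] \<noteq> []" using n1 by simp
    show "is_projection st (Psigma st U n \<sigma>) \<and>
            central_in (Psigma st U n \<sigma>)
              (cstar_generated st iu {U i k | i k. i \<in> {1..n} \<and> k \<in> {1..n}})"
      using central_prod[OF H ne] by (simp add: ps)
  qed
qed

end

theorem proposition3p19:
  fixes st :: "'a::{real_normed_algebra_1,banach} \<Rightarrow> 'a" and iu :: 'a
    and n :: nat and \<theta> :: "nat \<Rightarrow> nat \<Rightarrow> real" and U :: "nat \<Rightarrow> nat \<Rightarrow> 'a"
  assumes cstar: "unital_cstar_algebra st iu"
    and n2: "n \<ge> 2"
    and skew: "\<forall>i\<in>{1..n}. \<forall>j\<in>{1..n}. \<theta> j i = - \<theta> i j"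
    and R1: "\<forall>i\<in>{1..n}. \<forall>j\<in>{1..n}. \<forall>k\<in>{1..n}. \<forall>l\<in>{1..n}.
       U i k * U j l + scC iu (omega \<theta> j i) (U j k * U i l)
       = scC iu (omega \<theta> k l) (U i l * U j k) + scC iu (omega \<theta> j i * omega \<theta> k l) (U j l * U i k)"
    and R2: "\<forall>k\<in>{1..n}. \<forall>l\<in>{1..n}. (\<Sum>i=1..n. U i k * st (U i l)) = (if k = l then 1 else 0)"
    and R3: "\<forall>k\<in>{1..n}. \<forall>l\<in>{1..n}. (\<Sum>i=1..n. st (U i l) * U i k) = (if k = l then 1 else 0)"
    and R4: "\<forall>i\<in>{1..n}. \<forall>j\<in>{1..n}. \<forall>k\<in>{1..n}. i \<noteq> j \<longrightarrow> U j k * st (U i k) = 0"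
    and R5: "\<forall>i\<in>{1..n}. \<forall>j\<in>{1..n}. \<forall>k\<in>{1..n}. i \<noteq> j \<longrightarrow> st (U i k) * U j k = 0"
  shows "(\<forall>\<sigma>. \<sigma> permutes {1..n} \<longrightarrow>
            is_projection st (Psigma st U n \<sigma>) \<and>
            central_in (Psigma st U n \<sigma>)
              (cstar_generated st iu {U i k | i k. i \<in> {1..n} \<and> k \<in> {1..n}}))
         \<and> (\<Sum>\<sigma> | \<sigma> permutes {1..n}. Psigma st U n \<sigma>) = 1"
proof -
  interpret qrel st iu n \<theta> U
    by (intro qrel.intro cst.intro qrel_axioms.intro) (fact cstar skew R1 R2 R3 R4 R5)+
  show ?thesis by (rule main) (use n2 in simp)
qed

end
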